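(* Let $\mathcal{G}$ be an undirected weighted graph (nonzero real weights, possibly negative) with $c$ connected components, and suppose $L(\mathcal{G})$ has $n_+$ positive, $n_-$ negative and $n_0$ zero eigenvalues. Then for any spanning forest $\mathcal{F}$ with cycle subgraph $\mathcal{C}$, the symmetric matrix $R_{(\mathcal{F},\mathcal{C})}WR_{(\mathcal{F},\mathcal{C})}^T$ has $n_+$ positive, $n_-$ negative and $n_0-c$ zero eigenvalues.
   Context: A weighted graph $\mathcal{G}=(\mathcal{V},\mathcal{E},\mathcal{W})$ has weights $\mathcal{W}:\mathcal{E}\to\mathbb{R}\setminus\{0\}$ collected in the diagonal matrix $W$. With an arbitrary edge orientation, the incidence matrix $E$ has in the column of edge $(i,j)$ entry $+1$ in row $i$, $-1$ in row $j$, $0$ elsewhere; $L(\mathcal{G})=EWE^T$. A spanning forest $\mathcal{F}$ is an acyclic subgraph containing a spanning tree of each component; $\mathcal{C}$ consists of the remaining edges; edges ordered so $E=[E_{\mathcal{F}}\ E_{\mathcal{C}}]$ and $W$ correspondingly. $L_e(\mathcal{F})=E_{\mathcal{F}}^TE_{\mathcal{F}}$ and $R_{(\mathcal{F},\mathcal{C})}=[\,I\ \ L_e(\mathcal{F})^{-1}E_{\mathcal{F}}^TE_{\mathcal{C}}\,]$. *)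

theory Defs
  imports "Jordan_Normal_Form.Char_Poly" "Jordan_Normal_Form.Gauss_Jordan_Elimination"
begin

text \<open>Vertices are 0,...,n-1. Edges are given as a list of ordered pairs (i,j);
  the pair order is the (arbitrary) orientation. Weights are a list of the same length.\<close>

definition adj :: "(nat \<times> nat) list \<Rightarrow> (nat \<times> nat) set" where
  "adj es = {(i, j). (i, j) \<in> set es \<or> (j, i) \<in> set es}"

definition conn_rel :: "nat \<Rightarrow> (nat \<times> nat) list \<Rightarrow> (nat \<times> nat) set" where
  "conn_rel n es = {(u, v). u < n \<and> v < n \<and> (u, v) \<in> (adj es)\<^sup>*}"

definition num_components :: "nat \<Rightarrow> (nat \<times> nat) list \<Rightarrow> nat" where
  "num_components n es = card ({0..<n} // conn_rel n es)"

definition has_cycle :: "(nat \<times> nat) list \<Rightarrow> bool" where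
  "has_cycle es = (\<exists>vs. length vs \<ge> 3 \<and> distinct vs \<and>
      (\<forall>i < length vs. (vs ! i, vs ! ((i + 1) mod length vs)) \<in> adj es))"

definition simple_graph :: "nat \<Rightarrow> (nat \<times> nat) list \<Rightarrow> bool" where
  "simple_graph n es = ((\<forall>e \<in> set es. fst e < n \<and> snd e < n \<and> fst e \<noteq> snd e)
      \<and> distinct (map (\<lambda>(i, j). {i, j}) es))"

definition spanning_forest_prefix :: "nat \<Rightarrow> (nat \<times> nat) list \<Rightarrow> nat \<Rightarrow> bool" where
  "spanning_forest_prefix n es k = (k \<le> length es \<and> \<not> has_cycle (take k es)
      \<and> conn_rel n (take k es) = conn_rel n es)"

definition incidence :: "nat \<Rightarrow> (nat \<times> nat) list \<Rightarrow> real mat" where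
  "incidence n es = mat n (length es) (\<lambda>(i, j).
      if fst (es ! j) = i then 1 else if snd (es ! j) = i then -1 else 0)"

definition weight_mat :: "real list \<Rightarrow> real mat" where
  "weight_mat w = mat (length w) (length w) (\<lambda>(i, j). if i = j then w ! i else 0)"

definition laplacian :: "nat \<Rightarrow> (nat \<times> nat) list \<Rightarrow> real list \<Rightarrow> real mat" where
  "laplacian n es w = incidence n es * weight_mat w * transpose_mat (incidence n es)"

definition R_mat :: "nat \<Rightarrow> (nat \<times> nat) list \<Rightarrow> nat \<Rightarrow> real mat" where
  "R_mat n es k = (let EF = incidence n (take k es); EC = incidence n (drop k es);
      Le = transpose_mat EF * EF;
      X = the (mat_inverse Le) * transpose_mat EF * EC
    in mat k (length es) (\<lambda>(i, j). if j < k then (if i = j then 1 else 0) else X $$ (i, j - k)))"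

definition num_pos_eigs :: "real mat \<Rightarrow> nat" where
  "num_pos_eigs A = (\<Sum>x \<in> {x. x > 0 \<and> poly (char_poly A) x = 0}. order x (char_poly A))"

definition num_neg_eigs :: "real mat \<Rightarrow> nat" where
  "num_neg_eigs A = (\<Sum>x \<in> {x. x < 0 \<and> poly (char_poly A) x = 0}. order x (char_poly A))"

definition num_zero_eigs :: "real mat \<Rightarrow> nat" where
  "num_zero_eigs A = order 0 (char_poly A)"

end

theory Submission
  imports Defs
begin

lemma mult_entry: "A \<in> carrier_mat nr n \<Longrightarrow> B \<in> carrier_mat n nc \<Longrightarrow> i < nr \<Longrightarrow> j < nc \<Longrightarrow>
  (A * B) $$ (i,j) = (\<Sum>l<n. A $$ (i,l) * B $$ (l,j))"
  by (auto simp: scalar_prod_def lessThan_atLeast0 intro!: sum.cong)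

lemma mult_vec_entry: "A \<in> carrier_mat nr n \<Longrightarrow> v \<in> carrier_vec n \<Longrightarrow> i < nr \<Longrightarrow>
  (A *\<^sub>v v) $ i = (\<Sum>l<n. A $$ (i,l) * v $ l)"
  by (auto simp: scalar_prod_def lessThan_atLeast0 intro!: sum.cong)

lemma real_sym_eigenvalue:
  fixes M :: "real mat"
  assumes M: "M \<in> carrier_mat n n" and sym: "transpose_mat M = M" and n: "n > 0"
  shows "\<exists>e. eigenvalue M e"
proof -
  let ?MC = "map_mat complex_of_real M"
  have MC: "?MC \<in> carrier_mat n n" using M by auto
  obtain as where cp: "char_poly ?MC = (\<Prod>a\<leftarrow>as. [:- a, 1:])" and len: "length as = n"
    using char_poly_factorized[OF MC] by auto
  define l where "l = hd as"
  have "as \<noteq> []" using len n by auto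
  then have "poly (char_poly ?MC) l = 0" unfolding cp l_def by (cases as, auto)
  then have "eigenvalue ?MC l" using eigenvalue_root_char_poly[OF MC] by auto
  then obtain v where v: "v \<in> carrier_vec n" "v \<noteq> 0\<^sub>v n" "?MC *\<^sub>v v = l \<cdot>\<^sub>v v"
    unfolding eigenvalue_def eigenvector_def using MC by auto
  have symE: "\<And>i j. i < n \<Longrightarrow> j < n \<Longrightarrow> M $$ (i,j) = M $$ (j,i)"
    using sym M by (metis carrier_matD index_transpose_mat(1))
  define S where "S = (\<Sum>i<n. cnj (v $ i) * (?MC *\<^sub>v v) $ i)"
  define N where "N = (\<Sum>i<n. cnj (v $ i) * v $ i)"
  have S1: "S = l * N" unfolding S_def N_def v(3) using v(1)
    by (auto simp: sum_distrib_left intro!: sum.cong)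
  have mv: "(?MC *\<^sub>v v) $ i = (\<Sum>j<n. of_real (M $$ (i,j)) * v $ j)" if "i < n" for i
    using mult_vec_entry[OF MC v(1) that] M that by simp
  have S2: "S = (\<Sum>i<n. \<Sum>j<n. cnj (v $ i) * of_real (M $$ (i,j)) * v $ j)"
    unfolding S_def by (auto simp: mv sum_distrib_left mult.assoc intro!: sum.cong)
  have "cnj S = (\<Sum>i<n. \<Sum>j<n. v $ i * of_real (M $$ (i,j)) * cnj (v $ j))"
    unfolding S2 by simp
  also have "\<dots> = (\<Sum>j<n. \<Sum>i<n. v $ i * of_real (M $$ (i,j)) * cnj (v $ j))"
    by (rule sum.swap)
  also have "\<dots> = S" unfolding S2
    by (auto intro!: sum.cong simp: symE mult.commute mult.left_commute)
  finally have cS: "cnj S = S" .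
  have Nr: "N = of_real (\<Sum>i<n. (cmod (v $ i))^2)" unfolding N_def
    by (simp add: complex_norm_square mult.commute del: of_real_power)
  obtain i where i: "i < n" "v $ i \<noteq> 0" using v(1,2) by (metis eq_vecI carrier_vecD index_zero_vec)
  have "(\<Sum>i<n. (cmod (v $ i))^2) > 0"
    by (rule sum_pos2[of _ i], insert i, auto)
  hence N0: "N \<noteq> 0" unfolding Nr by (metis of_real_eq_0_iff order_less_irrefl)
  have cN: "cnj N = N" unfolding Nr by (simp only: complex_cnj_complex_of_real)
  have "cnj l * N = l * N" using cS S1 cN by (metis complex_cnj_mult)
  hence cl: "cnj l = l" using N0 by auto
  define e where "e = Re l"
  have le: "l = of_real e" unfolding e_def using cl by (metis Reals_cnj_iff complex_is_Real_iff of_real_Re)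
  have "complex_of_real (poly (char_poly M) e) = poly (char_poly ?MC) (of_real e)"
    by (simp only: of_real_hom.char_poly_hom[OF M] of_real_hom.poly_map_poly)
  hence "poly (char_poly M) e = 0" using `poly (char_poly ?MC) l = 0` le by simp
  thus ?thesis using eigenvalue_root_char_poly[OF M] by auto
qed

lemma householder:
  fixes u :: "real vec"
  assumes u: "u \<in> carrier_vec n" and uu: "u \<bullet> u = 1" and n: "n > 0"
  shows "\<exists>Q \<in> carrier_mat n n. transpose_mat Q * Q = 1\<^sub>m n \<and> Q * transpose_mat Q = 1\<^sub>m n \<and> col Q 0 = u"
proof (cases "u = unit_vec n 0")
  case True
  then show ?thesis by (intro bexI[of _ "1\<^sub>m n"], auto simp: n)
next
  case False
  define w where "w = u - unit_vec n 0"
  have w: "w \<in> carrier_vec n" unfolding w_def using u by auto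
  have wi: "w $ i = u $ i - (if i = 0 then 1 else 0)" if "i < n" for i
    unfolding w_def using u that by auto
  define s where "s = (\<Sum>l<n. w $ l * w $ l)"
  have uu': "(\<Sum>l<n. u $ l * u $ l) = 1" using uu u unfolding scalar_prod_def
    by (simp add: lessThan_atLeast0)
  have s_eq: "s = 2 - 2 * u $ 0"
  proof -
    have "s = (\<Sum>l<n. u $ l * u $ l - 2 * (if l = 0 then u $ l else 0) + (if l = 0 then 1 else 0))"
      unfolding s_def by (intro sum.cong, auto simp: wi algebra_simps power2_eq_square)
    also have "\<dots> = 1 - 2 * u $ 0 + 1" using n
      by (simp add: sum.distrib sum_subtractf uu' sum_distrib_left[symmetric])
    finally show ?thesis by simp
  qed
  have "w \<noteq> 0\<^sub>v n"
  proof
    assume w0: "w = 0\<^sub>v n"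
    have "u = unit_vec n 0"
    proof (intro eq_vecI)
      fix i assume "i < dim_vec (unit_vec n 0)"
      hence "i < n" by auto
      thus "u $ i = unit_vec n 0 $ i" using wi[of i] w0 by (auto split: if_splits)
    qed (insert u, auto)
    thus False using False by auto
  qed
  then obtain i where i: "i < n" "w $ i \<noteq> 0" using w by (metis eq_vecI carrier_vecD index_zero_vec)
  have spos: "s > 0" unfolding s_def by (rule sum_pos2[of _ i], insert i, auto simp: zero_less_mult_iff)
  define c where "c = 2 / s"
  have cs: "c * s = 2" unfolding c_def using spos by auto
  have cw0: "c * w $ 0 = -1" using wi[OF n] s_eq spos unfolding c_def by (auto simp: field_simps)
  define Q where "Q = mat n n (\<lambda>(i,j). (if i = j then 1 else 0) - c * w $ i * w $ j)"
  have Q: "Q \<in> carrier_mat n n" unfolding Q_def by auto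
  have QT: "transpose_mat Q = Q" unfolding Q_def by (intro eq_matI, auto)
  have QQ: "Q * Q = 1\<^sub>m n"
  proof (intro eq_matI)
    fix i j assume ij: "i < dim_row (1\<^sub>m n)" "j < dim_col (1\<^sub>m n)"
    hence ij: "i < n" "j < n" by auto
    have "(Q * Q) $$ (i,j) = (\<Sum>l<n. ((if i = l then 1 else 0) - c * w $ i * w $ l) * ((if l = j then 1 else 0) - c * w $ l * w $ j))"
      using mult_entry[OF Q Q ij] ij unfolding Q_def by (auto intro!: sum.cong)
    also have "\<dots> = (\<Sum>l<n. (if i = l then 1 else 0) * (if l = j then 1 else 0)
       - (if i = l then c * w $ l * w $ j else 0) - (if l = j then c * w $ i * w $ l else 0)
       + (c * c * w $ i * w $ j) * (w $ l * w $ l))"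
      by (intro sum.cong, auto simp: algebra_simps)
    also have "\<dots> = (if i = j then 1 else 0) - c * w $ i * w $ j - c * w $ i * w $ j + (c * c * w $ i * w $ j) * s"
    proof -
      have a: "(\<Sum>l<n. (if i = l then 1 else 0) * (if l = j then 1 else (0::real))) = (if i = j then 1 else 0)"
        using ij by (simp add: if_distrib[of "\<lambda>x. x * _"] sum.delta cong: if_cong)
      have b: "(\<Sum>l<n. (if i = l then c * w $ l * w $ j else 0)) = c * w $ i * w $ j"
        using ij by (simp add: sum.delta)
      have d: "(\<Sum>l<n. (if l = j then c * w $ i * w $ l else 0)) = c * w $ i * w $ j"
        using ij by (simp add: sum.delta')
      have e: "(\<Sum>l<n. (c * c * w $ i * w $ j) * (w $ l * w $ l)) = (c * c * w $ i * w $ j) * s"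
        unfolding s_def by (simp add: sum_distrib_left)
      show ?thesis unfolding sum.distrib sum_subtractf a b d e ..
    qed
    also have "\<dots> = (if i = j then 1 else 0) - 2 * c * w $ i * w $ j + (c * s) * c * w $ i * w $ j"
      by (simp add: algebra_simps)
    also have "\<dots> = (if i = j then 1 else 0)" unfolding cs by simp
    finally show "(Q * Q) $$ (i,j) = 1\<^sub>m n $$ (i,j)" using ij by simp
  qed (insert Q, auto)
  have "col Q 0 = u"
  proof (intro eq_vecI)
    fix i assume "i < dim_vec u" hence i: "i < n" using u by auto
    have "col Q 0 $ i = (if i = 0 then 1 else 0) - w $ i * (c * w $ 0)" using i n unfolding Q_def
      by (simp add: algebra_simps)
    also have "\<dots> = u $ i" unfolding cw0 using wi[OF i] by simp
    finally show "col Q 0 $ i = u $ i" .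
  qed (insert u Q, auto)
  thus ?thesis using Q QT QQ by (intro bexI[of _ Q], auto)
qed

lemma weight_mat_carrier[simp]: "weight_mat d \<in> carrier_mat (length d) (length d)"
  unfolding weight_mat_def by auto

lemma mult_weight_entry: assumes U: "U \<in> carrier_mat n k" and len: "length d = k"
  and i: "i < n" and l: "l < k"
  shows "(U * weight_mat d) $$ (i,l) = U $$ (i,l) * d ! l"
proof -
  have "(U * weight_mat d) $$ (i,l) = (\<Sum>m<k. U $$ (i,m) * (if m = l then d ! m else 0))"
    using mult_entry[OF U _ i l, of "weight_mat d"] len l unfolding weight_mat_def by (auto intro!: sum.cong)
  also have "\<dots> = U $$ (i,l) * d ! l" using l by (simp add: if_distrib[of "\<lambda>x. _ * x"] sum.delta' cong: if_cong)
  finally show ?thesis .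
qed

lemma udu_entry: assumes U: "U \<in> carrier_mat n k" and len: "length d = k"
  and i: "i < n" and j: "j < n"
  shows "(U * weight_mat d * transpose_mat U) $$ (i,j) = (\<Sum>l<k. U $$ (i,l) * d ! l * U $$ (j,l))"
proof -
  have UD: "U * weight_mat d \<in> carrier_mat n k" using U len by auto
  show ?thesis using mult_entry[OF UD _ i j, of "transpose_mat U"] U mult_weight_entry[OF U len i] j
    by (auto intro!: sum.cong)
qed

lemma orth_entry: assumes U: "U \<in> carrier_mat n k" and i: "i < k" and j: "j < k"
  shows "(transpose_mat U * U) $$ (i,j) = (\<Sum>l<n. U $$ (l,i) * U $$ (l,j))"
  using mult_entry[of "transpose_mat U" k n U k i j] U i j by auto

lemma orth_entry2: assumes U: "U \<in> carrier_mat n k" and i: "i < n" and j: "j < n"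
  shows "(U * transpose_mat U) $$ (i,j) = (\<Sum>l<k. U $$ (i,l) * U $$ (j,l))"
  using mult_entry[of U n k "transpose_mat U" n i j] U i j by auto

lemma spectral:
  fixes M :: "real mat"
  assumes "M \<in> carrier_mat n n" and "transpose_mat M = M"
  shows "\<exists>U d. U \<in> carrier_mat n n \<and> transpose_mat U * U = 1\<^sub>m n \<and> U * transpose_mat U = 1\<^sub>m n
     \<and> length d = n \<and> M = U * weight_mat d * transpose_mat U"
  using assms
proof (induction n arbitrary: M)
  case 0
  show ?case by (rule exI[of _ "1\<^sub>m 0"], rule exI[of _ "[]"], insert 0, auto)
next
  case (Suc n)
  have M: "M \<in> carrier_mat (Suc n) (Suc n)" and sym: "transpose_mat M = M" by fact+
  obtain e where "eigenvalue M e" using real_sym_eigenvalue[OF M sym] by auto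
  then obtain v where v: "v \<in> carrier_vec (Suc n)" "v \<noteq> 0\<^sub>v (Suc n)" "M *\<^sub>v v = e \<cdot>\<^sub>v v"
    unfolding eigenvalue_def eigenvector_def using M by auto
  define s where "s = v \<bullet> v"
  obtain i where i: "i < Suc n" "v $ i \<noteq> 0" using v(1,2) by (metis eq_vecI carrier_vecD index_zero_vec)
  have spos: "s > 0" unfolding s_def scalar_prod_def using v(1)
    by (intro sum_pos2[of _ i], insert i, auto simp: zero_less_mult_iff)
  define u where "u = (1 / sqrt s) \<cdot>\<^sub>v v"
  have u: "u \<in> carrier_vec (Suc n)" unfolding u_def using v by auto
  have uu: "u \<bullet> u = 1" unfolding u_def using v(1) spos
    by (simp add: s_def[symmetric] power2_eq_square[symmetric])
  have Mu: "M *\<^sub>v u = e \<cdot>\<^sub>v u" unfolding u_def using mult_mat_vec[OF M v(1)] v(3)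
    by (simp add: smult_smult_assoc mult.commute)
  obtain Q where Q: "Q \<in> carrier_mat (Suc n) (Suc n)" and QTQ: "transpose_mat Q * Q = 1\<^sub>m (Suc n)"
    and QQT: "Q * transpose_mat Q = 1\<^sub>m (Suc n)" and Q0: "col Q 0 = u"
    using householder[OF u uu] by auto
  define A where "A = transpose_mat Q * M * Q"
  have A: "A \<in> carrier_mat (Suc n) (Suc n)" unfolding A_def using Q M by auto
  have QM: "transpose_mat Q * M \<in> carrier_mat (Suc n) (Suc n)" using Q M by auto
  have "transpose_mat A = transpose_mat Q * transpose_mat (transpose_mat Q * M)" unfolding A_def
    using transpose_mult[OF QM Q] by simp
  also have "transpose_mat (transpose_mat Q * M) = M * Q"
    using transpose_mult[of "transpose_mat Q" "Suc n" "Suc n" M "Suc n"] Q M sym by simp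
  finally have symA: "transpose_mat A = A" unfolding A_def using Q M by simp
  have "col A 0 = (transpose_mat Q * M) *\<^sub>v col Q 0" unfolding A_def
    using col_mult2[OF QM Q, of 0] by simp
  also have "\<dots> = transpose_mat Q *\<^sub>v (M *\<^sub>v u)" unfolding Q0
    using Q M u by simp
  finally have "col A 0 = transpose_mat Q *\<^sub>v (M *\<^sub>v u)" .
  also have "\<dots> = e \<cdot>\<^sub>v (transpose_mat Q *\<^sub>v col Q 0)" unfolding Mu Q0
    using Q u by (simp add: mult_mat_vec[of _ "Suc n" "Suc n"])
  also have "transpose_mat Q *\<^sub>v col Q 0 = col (1\<^sub>m (Suc n)) 0" unfolding QTQ[symmetric]
    using col_mult2[of "transpose_mat Q" "Suc n" "Suc n" Q "Suc n" 0] Q by simp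
  finally have colA: "col A 0 = e \<cdot>\<^sub>v unit_vec (Suc n) 0" by simp
  have A0: "A $$ (i, 0) = (if i = 0 then e else 0)" if "i < Suc n" for i
    using arg_cong[OF colA, of "\<lambda>x. x $ i"] that A by auto
  have A0': "A $$ (0, j) = (if j = 0 then e else 0)" if "j < Suc n" for j
    using A0[OF that] arg_cong[OF symA, of "\<lambda>X. X $$ (0,j)"] that A by auto
  define M3 where "M3 = mat n n (\<lambda>(i,j). A $$ (Suc i, Suc j))"
  have M3: "M3 \<in> carrier_mat n n" unfolding M3_def by auto
  have sym3: "transpose_mat M3 = M3" unfolding M3_def
    using arg_cong[OF symA, of "\<lambda>X. X $$ (Suc _, Suc _)"] A
    by (intro eq_matI, auto) (metis Suc_less_eq carrier_matD index_transpose_mat(1))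
  obtain U3 d3 where U3: "U3 \<in> carrier_mat n n" and U3o: "transpose_mat U3 * U3 = 1\<^sub>m n"
    and U3o2: "U3 * transpose_mat U3 = 1\<^sub>m n" and d3: "length d3 = n"
    and M3d: "M3 = U3 * weight_mat d3 * transpose_mat U3"
    using Suc.IH[OF M3 sym3] by auto
  define B where "B = mat (Suc n) (Suc n) (\<lambda>(i,j). if i = 0 then (if j = 0 then 1 else 0)
     else if j = 0 then 0 else U3 $$ (i - 1, j - 1))"
  have B: "B \<in> carrier_mat (Suc n) (Suc n)" unfolding B_def by auto
  define d where "d = e # d3"
  have d: "length d = Suc n" unfolding d_def using d3 by auto
  have BTB: "transpose_mat B * B = 1\<^sub>m (Suc n)"
  proof (intro eq_matI)
    fix i j assume "i < dim_row (1\<^sub>m (Suc n))" "j < dim_col (1\<^sub>m (Suc n))"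
    hence ij: "i < Suc n" "j < Suc n" by auto
    have "(transpose_mat B * B) $$ (i,j) = (\<Sum>l<Suc n. B $$ (l,i) * B $$ (l,j))" by (rule orth_entry[OF B ij])
    also have "\<dots> = B $$ (0,i) * B $$ (0,j) + (\<Sum>l<n. B $$ (Suc l,i) * B $$ (Suc l,j))"
      by (simp only: sum.lessThan_Suc_shift)
    also have "\<dots> = 1\<^sub>m (Suc n) $$ (i,j)"
    proof (cases "i = 0 \<or> j = 0")
      case True thus ?thesis using ij unfolding B_def by auto
    next
      case False
      then obtain i' j' where ij': "i = Suc i'" "j = Suc j'" by (cases i; cases j; auto)
      have "(\<Sum>l<n. B $$ (Suc l,i) * B $$ (Suc l,j)) = (\<Sum>l<n. U3 $$ (l,i') * U3 $$ (l,j'))"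
        using ij ij' unfolding B_def by (auto intro!: sum.cong)
      also have "\<dots> = (transpose_mat U3 * U3) $$ (i',j')" using orth_entry[OF U3, of i' j'] ij ij' by auto
      finally show ?thesis unfolding U3o using ij ij' unfolding B_def by auto
    qed
    finally show "(transpose_mat B * B) $$ (i,j) = 1\<^sub>m (Suc n) $$ (i,j)" .
  qed (insert B, auto)
  have BBT: "B * transpose_mat B = 1\<^sub>m (Suc n)"
  proof (intro eq_matI)
    fix i j assume "i < dim_row (1\<^sub>m (Suc n))" "j < dim_col (1\<^sub>m (Suc n))"
    hence ij: "i < Suc n" "j < Suc n" by auto
    have "(B * transpose_mat B) $$ (i,j) = (\<Sum>l<Suc n. B $$ (i,l) * B $$ (j,l))" by (rule orth_entry2[OF B ij])
    also have "\<dots> = B $$ (i,0) * B $$ (j,0) + (\<Sum>l<n. B $$ (i,Suc l) * B $$ (j,Suc l))"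
      by (simp only: sum.lessThan_Suc_shift)
    also have "\<dots> = 1\<^sub>m (Suc n) $$ (i,j)"
    proof (cases "i = 0 \<or> j = 0")
      case True thus ?thesis using ij unfolding B_def by auto
    next
      case False
      then obtain i' j' where ij': "i = Suc i'" "j = Suc j'" by (cases i; cases j; auto)
      have "(\<Sum>l<n. B $$ (i,Suc l) * B $$ (j,Suc l)) = (\<Sum>l<n. U3 $$ (i',l) * U3 $$ (j',l))"
        using ij ij' unfolding B_def by (auto intro!: sum.cong)
      also have "\<dots> = (U3 * transpose_mat U3) $$ (i',j')" using orth_entry2[OF U3, of i' j'] ij ij' by auto
      finally show ?thesis unfolding U3o2 using ij ij' unfolding B_def by auto
    qed
    finally show "(B * transpose_mat B) $$ (i,j) = 1\<^sub>m (Suc n) $$ (i,j)" .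
  qed (insert B, auto)
  have AB: "A = B * weight_mat d * transpose_mat B"
  proof (intro eq_matI)
    fix i j assume "i < dim_row (B * weight_mat d * transpose_mat B)" "j < dim_col (B * weight_mat d * transpose_mat B)"
    hence ij: "i < Suc n" "j < Suc n" using B d by auto
    have "(B * weight_mat d * transpose_mat B) $$ (i,j) = (\<Sum>l<Suc n. B $$ (i,l) * d ! l * B $$ (j,l))"
      by (rule udu_entry[OF B d ij])
    also have "\<dots> = B $$ (i,0) * e * B $$ (j,0) + (\<Sum>l<n. B $$ (i,Suc l) * d3 ! l * B $$ (j,Suc l))"
      by (simp only: sum.lessThan_Suc_shift d_def nth_Cons_0 nth_Cons_Suc)
    also have "\<dots> = A $$ (i,j)"
    proof (cases "i = 0 \<or> j = 0")
      case True thus ?thesis using ij A0 A0' unfolding B_def by auto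
    next
      case False
      then obtain i' j' where ij': "i = Suc i'" "j = Suc j'" by (cases i; cases j; auto)
      have "(\<Sum>l<n. B $$ (i,Suc l) * d3 ! l * B $$ (j,Suc l)) = (\<Sum>l<n. U3 $$ (i',l) * d3 ! l * U3 $$ (j',l))"
        using ij ij' unfolding B_def by (auto intro!: sum.cong)
      also have "\<dots> = M3 $$ (i',j')" unfolding M3d using udu_entry[OF U3 d3, of i' j'] ij ij' by auto
      finally show ?thesis using ij ij' unfolding B_def M3_def by auto
    qed
    finally show "A $$ (i,j) = (B * weight_mat d * transpose_mat B) $$ (i,j)" by simp
  qed (insert A B d, auto)
  define U where "U = Q * B"
  have U: "U \<in> carrier_mat (Suc n) (Suc n)" unfolding U_def using Q B by auto
  have UT: "transpose_mat U = transpose_mat B * transpose_mat Q" unfolding U_def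
    by (rule transpose_mult[OF Q B])
  have QB: "Q \<in> carrier_mat (Suc n) (Suc n)" "B \<in> carrier_mat (Suc n) (Suc n)"
    "transpose_mat Q \<in> carrier_mat (Suc n) (Suc n)" "transpose_mat B \<in> carrier_mat (Suc n) (Suc n)"
    "weight_mat d \<in> carrier_mat (Suc n) (Suc n)" using Q B d weight_mat_carrier[of d] by auto
  have "transpose_mat U * U = transpose_mat B * (transpose_mat Q * Q) * B"
    unfolding U_def using QB by (simp add: transpose_mult[OF Q B] assoc_mult_mat[of _ "Suc n" "Suc n" _ "Suc n" _ "Suc n"])
  also have "\<dots> = 1\<^sub>m (Suc n)" unfolding QTQ using BTB QB by simp
  finally have UTU: "transpose_mat U * U = 1\<^sub>m (Suc n)" .
  have "U * transpose_mat U = Q * (B * transpose_mat B) * transpose_mat Q"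
    unfolding U_def using QB by (simp add: transpose_mult[OF Q B] assoc_mult_mat[of _ "Suc n" "Suc n" _ "Suc n" _ "Suc n"])
  also have "\<dots> = 1\<^sub>m (Suc n)" unfolding BBT using QQT QB by simp
  finally have UUT: "U * transpose_mat U = 1\<^sub>m (Suc n)" .
  have "M = (Q * transpose_mat Q) * M * (Q * transpose_mat Q)" unfolding QQT using M by simp
  also have "\<dots> = Q * A * transpose_mat Q" unfolding A_def using QB M
    by (simp add: assoc_mult_mat[of _ "Suc n" "Suc n" _ "Suc n" _ "Suc n"])
  also have "\<dots> = U * weight_mat d * transpose_mat U" unfolding AB U_def using QB
    by (simp add: transpose_mult[OF Q B] assoc_mult_mat[of _ "Suc n" "Suc n" _ "Suc n" _ "Suc n"])
  finally show ?case using U UTU UUT d by blast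
qed

lemma prod_linear_nz: "(\<Prod>a\<leftarrow>d. [:- a, 1::real:]) \<noteq> 0"
proof (induct d)
  case (Cons a d)
  have "[:- a, 1::real:] \<noteq> 0" by simp
  thus ?case using Cons by (simp only: prod_list.Cons list.map mult_eq_0_iff) simp
qed simp

lemma order_prod_linear: "order x (\<Prod>a\<leftarrow>d. [:- a, 1::real:]) = count_list d x"
proof (induct d)
  case Nil thus ?case by (simp add: order_0I)
next
  case (Cons a d)
  have "order x (\<Prod>a\<leftarrow>a # d. [:- a, 1:]) = order x [:- a, 1:] + order x (\<Prod>a\<leftarrow>d. [:- a, 1::real:])"
    using order_mult[of "[:- a, 1:]" "\<Prod>a\<leftarrow>d. [:- a, 1::real:]" x] prod_linear_nz[of "a # d"] by simp
  also have "order x [:- a, 1::real:] = (if x = a then 1 else 0)"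
  proof (cases "x = a")
    case True thus ?thesis using order_power_n_n[of a 1] by simp
  next
    case False thus ?thesis by (simp, intro order_0I, auto)
  qed
  finally show ?case using Cons by auto
qed

lemma sum_roots_count: "(\<Sum>x\<in>{x. P x \<and> poly (\<Prod>a\<leftarrow>d. [:- a, 1::real:]) x = 0}. order x (\<Prod>a\<leftarrow>d. [:- a, 1::real:]))
   = length (filter P d)"
proof -
  have roots: "{x. P x \<and> poly (\<Prod>a\<leftarrow>d. [:- a, 1::real:]) x = 0} = {x. P x \<and> x \<in> set d}"
    using order_root[of "\<Prod>a\<leftarrow>d. [:- a, 1::real:]"] prod_linear_nz
    by (auto simp: order_prod_linear count_list_0_iff)
  have "(\<Sum>x\<in>{x. P x \<and> x \<in> set d}. count_list d x) = (\<Sum>x\<in>{x. P x \<and> x \<in> set d}. count_list (filter P d) x)"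
    by (intro sum.cong, auto simp: count_list_eq_length_filter filter_filter intro!: arg_cong[of _ _ length] filter_cong)
  also have "\<dots> = length (filter P d)" by (rule sum_count_set, auto)
  finally show ?thesis unfolding roots order_prod_linear .
qed

lemma char_poly_orth: assumes U: "U \<in> carrier_mat n n" and o1: "transpose_mat U * U = 1\<^sub>m n"
  and o2: "U * transpose_mat U = 1\<^sub>m n" and d: "length d = n"
  shows "char_poly (U * weight_mat d * transpose_mat U) = (\<Prod>a\<leftarrow>d. [:- a, 1::real:])"
proof -
  have D: "weight_mat d \<in> carrier_mat n n" using d weight_mat_carrier[of d] by simp
  have "similar_mat (U * weight_mat d * transpose_mat U) (weight_mat d)"
    unfolding similar_mat_def
    by (rule exI[of _ U], rule exI[of _ "transpose_mat U"], unfold similar_mat_wit_def Let_def,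
       insert U D o1 o2, auto)
  hence "char_poly (U * weight_mat d * transpose_mat U) = char_poly (weight_mat d)"
    by (rule char_poly_similar)
  also have "\<dots> = (\<Prod>a\<leftarrow>diag_mat (weight_mat d). [:- a, 1:])"
    by (rule char_poly_upper_triangular[OF D], auto simp: upper_triangular_def weight_mat_def)
  also have "diag_mat (weight_mat d) = d" unfolding diag_mat_def weight_mat_def
    by (intro nth_equalityI, auto)
  finally show ?thesis .
qed

lemma eig_counts: assumes U: "U \<in> carrier_mat n n" and o1: "transpose_mat U * U = 1\<^sub>m n"
  and o2: "U * transpose_mat U = 1\<^sub>m n" and d: "length d = n"
  shows "num_pos_eigs (U * weight_mat d * transpose_mat U) = length (filter (\<lambda>a. a > 0) d)"
    "num_neg_eigs (U * weight_mat d * transpose_mat U) = length (filter (\<lambda>a. a < 0) d)"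
    "num_zero_eigs (U * weight_mat d * transpose_mat U) = length (filter (\<lambda>a. a = 0) d)"
  using sum_roots_count[where P="\<lambda>x. x > 0" and d=d] sum_roots_count[where P="\<lambda>x. x < 0" and d=d] order_prod_linear[of 0 d]
  unfolding num_pos_eigs_def num_neg_eigs_def num_zero_eigs_def char_poly_orth[OF assms]
    count_list_eq_length_filter
  by (auto intro!: arg_cong[of _ _ length] filter_cong)

lemma det_last_row_zero: assumes A: "A \<in> carrier_mat n n" and k: "k < n"
  and z: "\<And>j. j < n \<Longrightarrow> A $$ (k,j) = 0"
  shows "det A = (0 :: 'a :: comm_ring_1)"
proof -
  have "det A = (\<Sum>p\<in>{p. p permutes {0..<n}}. signof p * (\<Prod>i = 0..<n. A $$ (i, p i)))"
    by (rule det_def'[OF A])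
  also have "\<dots> = 0"
  proof (intro sum.neutral ballI)
    fix p assume "p \<in> {p. p permutes {0..<n}}"
    hence "p k < n" using k by (simp add: permutes_in_image)
    hence "(\<Prod>i = 0..<n. A $$ (i, p i)) = 0" using k z by (intro prod_zero) (auto intro!: bexI[of _ k])
    thus "signof p * (\<Prod>i = 0..<n. A $$ (i, p i)) = 0" by simp
  qed
  finally show ?thesis .
qed

lemma nonzero_sol:
  fixes N :: "real mat"
  assumes N: "N \<in> carrier_mat k n" and T: "T \<subseteq> {..<k}" and S: "S \<subseteq> {..<n}"
  and card: "card T < card S"
  shows "\<exists>u \<in> carrier_vec n. u \<noteq> 0\<^sub>v n \<and> (\<forall>i<n. i \<notin> S \<longrightarrow> u $ i = 0) \<and> (\<forall>r\<in>T. (N *\<^sub>v u) $ r = 0)"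
proof -
  define s where "s = card S"
  define t where "t = card T"
  have fS: "finite S" using S finite_subset by blast
  have fT: "finite T" using T finite_subset by blast
  obtain f where f: "bij_betw f {0..<s} S" using ex_bij_betw_nat_finite[OF fS] unfolding s_def by auto
  obtain g where g: "bij_betw g {0..<t} T" using ex_bij_betw_nat_finite[OF fT] unfolding t_def by auto
  have ts: "t < s" using card unfolding s_def t_def .
  define N' where "N' = mat s s (\<lambda>(i,j). if i < t then N $$ (g i, f j) else 0)"
  have N': "N' \<in> carrier_mat s s" unfolding N'_def by auto
  have "det N' = 0" by (rule det_last_row_zero[OF N', of "s - 1"], insert ts, auto simp: N'_def)
  then obtain y where y: "y \<in> carrier_vec s" "y \<noteq> 0\<^sub>v s" "N' *\<^sub>v y = 0\<^sub>v s"
    using det_0_iff_vec_prod_zero[OF N'] by auto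
  define u where "u = vec n (\<lambda>i. if i \<in> S then y $ (inv_into {0..<s} f i) else 0)"
  have u: "u \<in> carrier_vec n" unfolding u_def by auto
  have fj: "f j \<in> S" if "j < s" for j using f that by (auto simp: bij_betw_def)
  have fn: "f j < n" if "j < s" for j using fj[OF that] S by auto
  have invf: "inv_into {0..<s} f (f j) = j" if "j < s" for j using bij_betw_inv_into_left[OF f] that by auto
  have uf: "u $ f j = y $ j" if "j < s" for j unfolding u_def using fj[OF that] fn[OF that] invf[OF that] by auto
  have "u \<noteq> 0\<^sub>v n"
  proof
    assume u0: "u = 0\<^sub>v n"
    have "y = 0\<^sub>v s"
    proof (intro eq_vecI)
      fix j assume "j < dim_vec (0\<^sub>v s)" hence j: "j < s" by auto
      show "y $ j = 0\<^sub>v s $ j" using uf[OF j] u0 fn[OF j] j by auto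
    qed (insert y, auto)
    thus False using y by auto
  qed
  moreover have "\<forall>i<n. i \<notin> S \<longrightarrow> u $ i = 0" unfolding u_def by auto
  moreover have "\<forall>r\<in>T. (N *\<^sub>v u) $ r = 0"
  proof
    fix r assume r: "r \<in> T"
    then obtain i where i: "i < t" "g i = r" using g by (auto simp: bij_betw_def)
    have rk: "r < k" using r T by auto
    have "(N *\<^sub>v u) $ r = (\<Sum>l<n. N $$ (r,l) * u $ l)" by (rule mult_vec_entry[OF N u rk])
    also have "\<dots> = (\<Sum>l\<in>S. N $$ (r,l) * u $ l)"
      by (rule sum.mono_neutral_right, insert S, auto simp: u_def)
    also have "\<dots> = (\<Sum>j\<in>{0..<s}. N $$ (r, f j) * u $ f j)"
      by (rule sum.reindex_bij_betw[OF f, symmetric])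
    also have "\<dots> = (\<Sum>j<s. N' $$ (i,j) * y $ j)"
      using i ts by (auto simp: lessThan_atLeast0 uf N'_def intro!: sum.cong)
    also have "\<dots> = (N' *\<^sub>v y) $ i" using mult_vec_entry[OF N' y(1), of i] i ts by auto
    also have "\<dots> = 0" using y i ts by auto
    finally show "(N *\<^sub>v u) $ r = 0" .
  qed
  ultimately show ?thesis using u by blast
qed

lemma qf_expand:
  fixes y :: "nat \<Rightarrow> real"
  shows "(\<Sum>i<n. \<Sum>j<n. y i * (\<Sum>r<m. B i r * e r * B j r) * y j) = (\<Sum>r<m. e r * (\<Sum>i<n. B i r * y i)^2)"
proof -
  have "(\<Sum>i<n. \<Sum>j<n. y i * (\<Sum>r<m. B i r * e r * B j r) * y j) = (\<Sum>i<n. \<Sum>j<n. \<Sum>r<m. e r * (B i r * y i) * (B j r * y j))"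
    by (simp add: sum_distrib_left sum_distrib_right mult_ac)
  also have "\<dots> = (\<Sum>i<n. \<Sum>r<m. \<Sum>j<n. e r * (B i r * y i) * (B j r * y j))"
    by (simp add: sum.swap[of _ "{..<n}" "{..<m}"])
  also have "\<dots> = (\<Sum>r<m. \<Sum>i<n. \<Sum>j<n. e r * (B i r * y i) * (B j r * y j))"
    by (rule sum.swap)
  also have "\<dots> = (\<Sum>r<m. e r * (\<Sum>i<n. B i r * y i)^2)"
    by (simp add: power2_eq_square sum_distrib_left sum_distrib_right mult_ac)
  finally show ?thesis .
qed

lemma sylv_core:
  fixes B1 B2 G :: "real mat"
  assumes B1: "B1 \<in> carrier_mat n m1" and B2: "B2 \<in> carrier_mat n m2" and G: "G \<in> carrier_mat n m1"
  and e1: "length e1 = m1" and e2: "length e2 = m2"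
  and BG: "transpose_mat B1 * G = 1\<^sub>m m1"
  and eq: "\<And>i j. i < n \<Longrightarrow> j < n \<Longrightarrow> (\<Sum>r<m1. B1 $$ (i,r) * e1 ! r * B1 $$ (j,r)) = (\<Sum>r<m2. B2 $$ (i,r) * e2 ! r * B2 $$ (j,r))"
  shows "card {r. r < m1 \<and> e1 ! r > 0} \<le> card {r. r < m2 \<and> e2 ! r > 0}"
proof (rule ccontr)
  define S1 where "S1 = {r. r < m1 \<and> e1 ! r > 0}"
  define S2 where "S2 = {r. r < m2 \<and> e2 ! r > 0}"
  assume "\<not> ?thesis"
  hence card: "card S2 < card S1" unfolding S1_def S2_def by auto
  define N where "N = transpose_mat B2 * G"
  have N: "N \<in> carrier_mat m2 m1" unfolding N_def using B2 G by auto
  obtain u where u: "u \<in> carrier_vec m1" "u \<noteq> 0\<^sub>v m1" "\<forall>i<m1. i \<notin> S1 \<longrightarrow> u $ i = 0"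
    "\<forall>r\<in>S2. (N *\<^sub>v u) $ r = 0"
    using nonzero_sol[OF N _ _ card] unfolding S1_def S2_def by auto
  define y where "y = G *\<^sub>v u"
  have y: "y \<in> carrier_vec n" unfolding y_def using G u by auto
  have a: "(\<Sum>i<n. B1 $$ (i,r) * y $ i) = u $ r" if r: "r < m1" for r
  proof -
    have "transpose_mat B1 *\<^sub>v y = u" unfolding y_def
      using assoc_mult_mat_vec[of "transpose_mat B1" m1 n G m1 u] B1 G u BG by simp
    hence "(transpose_mat B1 *\<^sub>v y) $ r = u $ r" by simp
    thus ?thesis using mult_vec_entry[of "transpose_mat B1" m1 n y r] B1 y r by auto
  qed
  have b: "(\<Sum>i<n. B2 $$ (i,r) * y $ i) = (N *\<^sub>v u) $ r" if r: "r < m2" for r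
  proof -
    have "transpose_mat B2 *\<^sub>v y = N *\<^sub>v u" unfolding y_def N_def
      using assoc_mult_mat_vec[of "transpose_mat B2" m2 n G m1 u] B2 G u by simp
    hence "(transpose_mat B2 *\<^sub>v y) $ r = (N *\<^sub>v u) $ r" by simp
    thus ?thesis using mult_vec_entry[of "transpose_mat B2" m2 n y r] B2 y r by auto
  qed
  define q where "q = (\<Sum>i<n. \<Sum>j<n. y $ i * (\<Sum>r<m1. B1 $$ (i,r) * e1 ! r * B1 $$ (j,r)) * y $ j)"
  have q1: "q = (\<Sum>r<m1. e1 ! r * (u $ r)^2)"
    unfolding q_def qf_expand[where B="\<lambda>i r. B1 $$ (i,r)" and e="\<lambda>r. e1 ! r" and y="\<lambda>i. y $ i"]
    by (intro sum.cong, auto simp: a)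
  have q2: "q = (\<Sum>r<m2. e2 ! r * ((N *\<^sub>v u) $ r)^2)"
    unfolding q_def using eq
    by (simp add: qf_expand[where B="\<lambda>i r. B2 $$ (i,r)" and e="\<lambda>r. e2 ! r" and y="\<lambda>i. y $ i"] b)
  obtain i where i: "i < m1" "u $ i \<noteq> 0" using u(1,2) by (metis eq_vecI carrier_vecD index_zero_vec)
  have iS: "i \<in> S1" using u(3) i by auto
  have "q > 0" unfolding q1
  proof (rule sum_pos2[of _ i])
    show "0 < e1 ! i * (u $ i)\<^sup>2" using iS i unfolding S1_def by auto
    fix r assume "r \<in> {..<m1}"
    thus "0 \<le> e1 ! r * (u $ r)\<^sup>2" using u(3) unfolding S1_def
      by (cases "r \<in> S1", auto simp: S1_def)
  qed (insert i, auto)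
  moreover have "q \<le> 0" unfolding q2
  proof (rule sum_nonpos)
    fix r assume r: "r \<in> {..<m2}"
    show "e2 ! r * ((N *\<^sub>v u) $ r)\<^sup>2 \<le> 0"
    proof (cases "r \<in> S2")
      case True thus ?thesis using u(4) by auto
    next
      case False hence "e2 ! r \<le> 0" using r unfolding S2_def by auto
      thus ?thesis by (simp add: mult_nonpos_nonneg)
    qed
  qed
  ultimately show False by auto
qed

lemma sylv_both:
  fixes B1 B2 G :: "real mat"
  assumes B1: "B1 \<in> carrier_mat n m1" and B2: "B2 \<in> carrier_mat n m2" and G: "G \<in> carrier_mat n m1"
  and e1: "length e1 = m1" and e2: "length e2 = m2"
  and BG: "transpose_mat B1 * G = 1\<^sub>m m1"
  and eq: "\<And>i j. i < n \<Longrightarrow> j < n \<Longrightarrow> (\<Sum>r<m1. B1 $$ (i,r) * e1 ! r * B1 $$ (j,r)) = (\<Sum>r<m2. B2 $$ (i,r) * e2 ! r * B2 $$ (j,r))"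
  shows "length (filter (\<lambda>a. a > 0) e1) \<le> length (filter (\<lambda>a. a > 0) e2)"
    "length (filter (\<lambda>a. a < 0) e1) \<le> length (filter (\<lambda>a. a < 0) e2)"
proof -
  show "length (filter (\<lambda>a. a > 0) e1) \<le> length (filter (\<lambda>a. a > 0) e2)"
    unfolding length_filter_conv_card e1 e2 by (rule sylv_core[OF B1 B2 G e1 e2 BG eq])
  have e1': "length (map uminus e1) = m1" and e2': "length (map uminus e2) = m2" using e1 e2 by auto
  have eq': "(\<Sum>r<m1. B1 $$ (i,r) * map uminus e1 ! r * B1 $$ (j,r)) = (\<Sum>r<m2. B2 $$ (i,r) * map uminus e2 ! r * B2 $$ (j,r))"
    if "i < n" "j < n" for i j
  proof -
    have "(\<Sum>r<m1. B1 $$ (i,r) * map uminus e1 ! r * B1 $$ (j,r)) = - (\<Sum>r<m1. B1 $$ (i,r) * e1 ! r * B1 $$ (j,r))"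
      using e1 by (simp add: sum_negf[symmetric])
    also have "\<dots> = - (\<Sum>r<m2. B2 $$ (i,r) * e2 ! r * B2 $$ (j,r))" using eq[OF that] by simp
    also have "\<dots> = (\<Sum>r<m2. B2 $$ (i,r) * map uminus e2 ! r * B2 $$ (j,r))"
      using e2 by (simp add: sum_negf[symmetric])
    finally show ?thesis .
  qed
  have "card {r. r < m1 \<and> map uminus e1 ! r > 0} \<le> card {r. r < m2 \<and> map uminus e2 ! r > 0}"
    by (rule sylv_core[OF B1 B2 G e1' e2' BG eq'])
  moreover have "{r. r < m1 \<and> map uminus e1 ! r > 0} = {r. r < m1 \<and> e1 ! r < 0}" using e1 by auto
  moreover have "{r. r < m2 \<and> map uminus e2 ! r > 0} = {r. r < m2 \<and> e2 ! r < 0}" using e2 by auto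
  ultimately show "length (filter (\<lambda>a. a < 0) e1) \<le> length (filter (\<lambda>a. a < 0) e2)"
    unfolding length_filter_conv_card e1 e2 by simp
qed

lemma inertia_transfer:
  fixes P M G :: "real mat"
  assumes P: "P \<in> carrier_mat n k" and M: "M \<in> carrier_mat k k" and sym: "transpose_mat M = M"
  and G: "G \<in> carrier_mat k k" and GP: "G * (transpose_mat P * P) = 1\<^sub>m k"
  shows "num_pos_eigs (P * M * transpose_mat P) = num_pos_eigs M"
    "num_neg_eigs (P * M * transpose_mat P) = num_neg_eigs M"
    "num_zero_eigs (P * M * transpose_mat P) + k = num_zero_eigs M + n"
proof -
  define L where "L = P * M * transpose_mat P"
  have L: "L \<in> carrier_mat n n" unfolding L_def using P M by auto
  have PM: "P * M \<in> carrier_mat n k" using P M by auto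
  have symL: "transpose_mat L = L" unfolding L_def
    using transpose_mult[OF PM, of "transpose_mat P" n] transpose_mult[OF P M] P M sym
    by (simp add: assoc_mult_mat[of P n k M k "transpose_mat P" n])
  obtain U d where U: "U \<in> carrier_mat k k" and U1: "transpose_mat U * U = 1\<^sub>m k"
    and U2: "U * transpose_mat U = 1\<^sub>m k" and d: "length d = k" and Md: "M = U * weight_mat d * transpose_mat U"
    using spectral[OF M sym] by auto
  obtain V d' where V: "V \<in> carrier_mat n n" and V1: "transpose_mat V * V = 1\<^sub>m n"
    and V2: "V * transpose_mat V = 1\<^sub>m n" and d': "length d' = n" and Ld: "L = V * weight_mat d' * transpose_mat V"
    using spectral[OF L symL] by auto
  define A where "A = P * U"
  have A: "A \<in> carrier_mat n k" unfolding A_def using P U by auto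
  have D: "weight_mat d \<in> carrier_mat k k" using d weight_mat_carrier[of d] by simp
  have LA: "L = A * weight_mat d * transpose_mat A"
  proof -
    have "L = P * (U * weight_mat d * transpose_mat U) * transpose_mat P" unfolding L_def Md ..
    also have "\<dots> = (P * U) * weight_mat d * (transpose_mat U * transpose_mat P)"
      using P U D by (simp add: assoc_mult_mat[of _ n k _ k _ k] assoc_mult_mat[of _ k k _ k _ n] assoc_mult_mat[of _ n k _ k _ n])
    also have "transpose_mat U * transpose_mat P = transpose_mat (P * U)" using transpose_mult[OF P U] by simp
    finally show ?thesis unfolding A_def .
  qed
  have eq: "(\<Sum>r<n. V $$ (i,r) * d' ! r * V $$ (j,r)) = (\<Sum>r<k. A $$ (i,r) * d ! r * A $$ (j,r))"
    if "i < n" "j < n" for i j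
    using udu_entry[OF V d' that] udu_entry[OF A d that] Ld LA by simp
  have VV: "transpose_mat V * V = 1\<^sub>m n" by fact
  have I: "length (filter (\<lambda>a. a > 0) d') \<le> length (filter (\<lambda>a. a > 0) d)"
    "length (filter (\<lambda>a. a < 0) d') \<le> length (filter (\<lambda>a. a < 0) d)"
    using sylv_both[OF V A V d' d VV eq] by auto
  have PP: "transpose_mat P * P \<in> carrier_mat k k" using P by auto
  have PG: "(transpose_mat P * P) * G = 1\<^sub>m k" by (rule mat_mult_left_right_inverse[OF G PP GP])
  define C where "C = P * G * U"
  have C: "C \<in> carrier_mat n k" unfolding C_def using P G U by auto
  have AC: "transpose_mat A * C = 1\<^sub>m k"
  proof -
    have "transpose_mat A * C = transpose_mat U * ((transpose_mat P * P) * G) * U"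
      unfolding A_def C_def transpose_mult[OF P U] using P G U
      by (simp add: assoc_mult_mat[of _ k k _ k _ k] assoc_mult_mat[of _ k n _ k _ k] assoc_mult_mat[of _ k n _ n _ k] assoc_mult_mat[of _ k k _ n _ k] assoc_mult_mat[of _ n k _ k _ k])
    also have "\<dots> = 1\<^sub>m k" unfolding PG using U U1 by simp
    finally show ?thesis .
  qed
  have II: "length (filter (\<lambda>a. a > 0) d) \<le> length (filter (\<lambda>a. a > 0) d')"
    "length (filter (\<lambda>a. a < 0) d) \<le> length (filter (\<lambda>a. a < 0) d')"
    using sylv_both[OF A V C d d' AC] eq by auto
  note cM = eig_counts[OF U U1 U2 d, folded Md]
  note cL = eig_counts[OF V V1 V2 d', folded Ld, unfolded L_def]
  show "num_pos_eigs (P * M * transpose_mat P) = num_pos_eigs M" unfolding cM cL using I II by simp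
  show "num_neg_eigs (P * M * transpose_mat P) = num_neg_eigs M" unfolding cM cL using I II by simp
  have split: "length (filter (\<lambda>a. a > 0) xs) + length (filter (\<lambda>a. a < 0) xs) + length (filter (\<lambda>a. a = 0) xs) = length xs"
    for xs :: "real list"
    by (induct xs, auto)
  show "num_zero_eigs (P * M * transpose_mat P) + k = num_zero_eigs M + n"
    unfolding cM cL using I II split[of d] split[of d'] d d' by linarith
qed

fun pchain :: "('a \<times> 'a) set \<Rightarrow> 'a list \<Rightarrow> bool" where
  "pchain R (x # y # zs) = ((x,y) \<in> R \<and> pchain R (y # zs))"
| "pchain R _ = True"

lemma pchain_tl: "pchain R (x # zs) \<Longrightarrow> pchain R zs"
  by (cases zs, auto)

lemma pchain_append: "pchain R (xs @ ys) \<Longrightarrow> pchain R ys"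
  by (induct xs, auto dest: pchain_tl)

lemma pchain_nth: "pchain R vs \<Longrightarrow> Suc i < length vs \<Longrightarrow> (vs ! i, vs ! Suc i) \<in> R"
proof (induction R vs arbitrary: i rule: pchain.induct)
  case (1 R x y zs)
  thus ?case by (cases i, auto)
qed auto

lemma rtrancl_path: "(a,b) \<in> R\<^sup>* \<Longrightarrow> \<exists>vs. vs \<noteq> [] \<and> hd vs = a \<and> last vs = b \<and> distinct vs \<and> pchain R vs"
proof (induction rule: converse_rtrancl_induct)
  case base
  show ?case by (rule exI[of _ "[b]"], auto)
next
  case (step a c)
  then obtain vs where vs: "vs \<noteq> []" "hd vs = c" "last vs = b" "distinct vs" "pchain R vs" by auto
  show ?case
  proof (cases "a \<in> set vs")
    case True
    then obtain xs ys where xy: "vs = xs @ a # ys" by (meson split_list)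
    have "last (a # ys) = b" using vs(3) unfolding xy by simp
    moreover have "distinct (a # ys)" using vs(4) unfolding xy by simp
    moreover have "pchain R (a # ys)" using pchain_append[of R xs "a # ys"] vs(5) unfolding xy by simp
    ultimately show ?thesis by (intro exI[of _ "a # ys"]) simp
  next
    case False
    then obtain zs where zs: "vs = c # zs" using vs by (cases vs, auto)
    have "pchain R (a # vs)" unfolding zs using step(1) vs(5) zs by simp
    moreover have "last (a # vs) = b" using vs by simp
    moreover have "distinct (a # vs)" using vs False by simp
    ultimately show ?thesis by (intro exI[of _ "a # vs"]) simp
  qed
qed

lemma simple_graphD: assumes "simple_graph n es" "e \<in> set es"
  shows "fst e < n" "snd e < n" "fst e \<noteq> snd e"
  using assms unfolding simple_graph_def by auto

lemma adj_mono: "set xs \<subseteq> set ys \<Longrightarrow> adj xs \<subseteq> adj ys"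
  unfolding adj_def by auto

lemma forest_edge_new:
  assumes sg: "simple_graph n es" and sf: "spanning_forest_prefix n es k" and j: "j < k"
  shows "(fst (es ! j), snd (es ! j)) \<notin> (adj (take j es))\<^sup>*"
proof
  define a where "a = fst (es ! j)"
  define b where "b = snd (es ! j)"
  have kl: "k \<le> length es" and nc: "\<not> has_cycle (take k es)" using sf unfolding spanning_forest_prefix_def by auto
  have jl: "j < length es" using j kl by auto
  have ej: "es ! j = (a,b)" unfolding a_def b_def by simp
  have ab: "a \<noteq> b" using simple_graphD(3)[OF sg nth_mem[OF jl]] unfolding a_def b_def .
  assume "(fst (es ! j), snd (es ! j)) \<in> (adj (take j es))\<^sup>*"
  hence "(a,b) \<in> (adj (take j es))\<^sup>*" unfolding a_def b_def .
  from rtrancl_path[OF this] obtain vs where vs: "vs \<noteq> []" "hd vs = a" "last vs = b" "distinct vs" "pchain (adj (take j es)) vs"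
    by blast
  have l2: "length vs \<ge> 2"
  proof (rule ccontr)
    assume "\<not> ?thesis"
    with vs(1) obtain x where "vs = [x]" by (cases vs, auto, case_tac list, auto)
    thus False using vs ab by auto
  qed
  show False
  proof (cases "length vs = 2")
    case True
    then obtain x y where "vs = [x,y]" by (cases vs, auto, case_tac list, auto)
    hence "(a,b) \<in> adj (take j es)" using vs by auto
    then obtain i where i: "i < j" "es ! i = (a,b) \<or> es ! i = (b,a)"
      unfolding adj_def using jl by (auto simp: in_set_conv_nth)
    have il: "i < length es" using i jl by auto
    have "map (\<lambda>(i, j). {i, j}) es ! i = map (\<lambda>(i, j). {i, j}) es ! j"
      using i il jl ej by auto
    moreover have "distinct (map (\<lambda>(i, j). {i, j}) es)" using sg unfolding simple_graph_def by auto
    ultimately have "i = j" using il jl nth_eq_iff_index_eq[of "map (\<lambda>(i, j). {i, j}) es" i j] by simp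
    thus False using i by auto
  next
    case False
    hence l3: "length vs \<ge> 3" using l2 by auto
    have "has_cycle (take k es)" unfolding has_cycle_def
    proof (intro exI[of _ vs] conjI allI impI)
      fix i assume i: "i < length vs"
      show "(vs ! i, vs ! ((i + 1) mod length vs)) \<in> adj (take k es)"
      proof (cases "Suc i < length vs")
        case True
        hence "(vs ! i, vs ! Suc i) \<in> adj (take j es)" using pchain_nth[OF vs(5)] by auto
        moreover have "adj (take j es) \<subseteq> adj (take k es)" using j
          by (intro adj_mono set_take_subset_set_take, auto)
        ultimately show ?thesis using True by auto
      next
        case False
        hence ii: "i = length vs - 1" using i by auto
        have "vs ! i = b" using vs(1,3) ii by (simp add: last_conv_nth)
        moreover have "vs ! ((i + 1) mod length vs) = a" using ii vs(1,2) i by (simp add: hd_conv_nth)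
        moreover have "take k es ! j \<in> set (take k es)" using j kl by (intro nth_mem) simp
        hence "(a,b) \<in> set (take k es)" using ej j by simp
        ultimately show ?thesis unfolding adj_def by auto
      qed
    qed (insert vs l3, auto)
    thus False using nc by auto
  qed
qed

lemma quotient_image: "A // r = (\<lambda>x. r``{x}) ` A" by (auto simp: quotient_def)

lemma rtrancl_add_edge:
  "(x,y) \<in> (S \<union> {(a,b),(b,a)})\<^sup>* \<longleftrightarrow> (x,y) \<in> S\<^sup>* \<or> ((x,a) \<in> S\<^sup>* \<and> (b,y) \<in> S\<^sup>*) \<or> ((x,b) \<in> S\<^sup>* \<and> (a,y) \<in> S\<^sup>*)"
  (is "?l \<longleftrightarrow> ?r")
proof
  assume ?l thus ?r
  proof (induction rule: rtrancl_induct)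
    case base thus ?case by auto
  next
    case (step y z)
    from step(2) consider "(y,z) \<in> S" | "y = a" "z = b" | "y = b" "z = a" by auto
    thus ?case
    proof cases
      case 1 thus ?thesis using step(3) by (meson rtrancl.rtrancl_into_rtrancl)
    next
      case 2 thus ?thesis using step(3) by auto
    next
      case 3 thus ?thesis using step(3) by auto
    qed
  qed
next
  have sub: "S\<^sup>* \<subseteq> (S \<union> {(a,b),(b,a)})\<^sup>*" by (rule rtrancl_mono, auto)
  have ab: "(a,b) \<in> (S \<union> {(a,b),(b,a)})\<^sup>*" "(b,a) \<in> (S \<union> {(a,b),(b,a)})\<^sup>*" by auto
  assume ?r
  then consider "(x,y) \<in> S\<^sup>*" | "(x,a) \<in> S\<^sup>*" "(b,y) \<in> S\<^sup>*" | "(x,b) \<in> S\<^sup>*" "(a,y) \<in> S\<^sup>*" by blast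
  thus ?l
  proof cases
    case 1 thus ?thesis using sub by blast
  next
    case 2
    hence "(x,a) \<in> (S \<union> {(a,b),(b,a)})\<^sup>*" "(b,y) \<in> (S \<union> {(a,b),(b,a)})\<^sup>*" using sub by blast+
    thus ?thesis using ab by (meson rtrancl_trans)
  next
    case 3
    hence "(x,b) \<in> (S \<union> {(a,b),(b,a)})\<^sup>*" "(a,y) \<in> (S \<union> {(a,b),(b,a)})\<^sup>*" using sub by blast+
    thus ?thesis using ab by (meson rtrancl_trans)
  qed
qed

lemma merge_card:
  fixes S :: "(nat \<times> nat) set" and n a b :: nat
  assumes symS: "sym S" and a: "a < n" and b: "b < n" and nab: "(a,b) \<notin> S\<^sup>*"
  shows "card ({0..<n} // {(u,v). u < n \<and> v < n \<and> (u,v) \<in> (S \<union> {(a,b),(b,a)})\<^sup>*}) + 1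
       = card ({0..<n} // {(u,v). u < n \<and> v < n \<and> (u,v) \<in> S\<^sup>*})"
proof -
  define R where "R = {(u,v). u < n \<and> v < n \<and> (u,v) \<in> S\<^sup>*}"
  define R' where "R' = {(u,v). u < n \<and> v < n \<and> (u,v) \<in> (S \<union> {(a,b),(b,a)})\<^sup>*}"
  define V where "V = {0..<n::nat}"
  have symr: "(v,u) \<in> S\<^sup>*" if "(u,v) \<in> S\<^sup>*" for u v
    using sym_rtrancl[OF symS] that by (auto dest: symD)
  define cls where "cls x = R``{x}" for x
  define cls' where "cls' x = R'``{x}" for x
  have cls_eq: "cls x = {y. y < n \<and> (x,y) \<in> S\<^sup>*}" if "x < n" for x unfolding cls_def R_def using that by auto
  have cls'_eq: "cls' x = {y. y < n \<and> (x,y) \<in> (S \<union> {(a,b),(b,a)})\<^sup>*}" if "x < n" for x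
    unfolding cls'_def R'_def using that by auto
  define C where "C = cls a \<union> cls b"
  define Out where "Out = V - C"
  have f1: "cls x = cls c" if "x < n" "c < n" "(c,x) \<in> S\<^sup>*" for x c
    unfolding cls_eq[OF that(1)] cls_eq[OF that(2)]
    using rtrancl_trans[OF that(3)] rtrancl_trans[OF symr[OF that(3)]] by auto
  have inC: "x \<in> C \<longleftrightarrow> (a,x) \<in> S\<^sup>* \<or> (b,x) \<in> S\<^sup>*" if "x < n" for x
    unfolding C_def cls_eq[OF a] cls_eq[OF b] using that by auto
  have f2: "cls' x = C" if x: "x < n" "x \<in> C" for x
  proof -
    from x inC have xc: "(a,x) \<in> S\<^sup>* \<or> (b,x) \<in> S\<^sup>*" by blast
    thus ?thesis
    proof
      assume ax: "(a,x) \<in> S\<^sup>*"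
      note xa = symr[OF ax]
      show ?thesis unfolding cls'_eq[OF x(1)] rtrancl_add_edge C_def cls_eq[OF a] cls_eq[OF b]
        using rtrancl_trans[OF ax] rtrancl_trans[OF xa] by auto
    next
      assume bx: "(b,x) \<in> S\<^sup>*"
      note xb = symr[OF bx]
      show ?thesis unfolding cls'_eq[OF x(1)] rtrancl_add_edge C_def cls_eq[OF a] cls_eq[OF b]
        using rtrancl_trans[OF bx] rtrancl_trans[OF xb] by auto
    qed
  qed
  have f3: "cls' x = cls x" if x: "x < n" "x \<notin> C" for x
  proof -
    from x inC have "(a,x) \<notin> S\<^sup>*" "(b,x) \<notin> S\<^sup>*" by auto
    hence xc: "(x,a) \<notin> S\<^sup>*" "(x,b) \<notin> S\<^sup>*" using symr by auto
    show ?thesis unfolding cls'_eq[OF x(1)] rtrancl_add_edge cls_eq[OF x(1)] using xc by auto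
  qed
  have aC: "a \<in> cls a" "b \<in> cls b" using cls_eq a b by auto
  have bna: "b \<notin> cls a" using nab cls_eq[OF a] by auto
  have notout: "cls c \<noteq> cls x" if "c \<in> {a,b}" "x \<in> Out" for c x
  proof
    assume eq: "cls c = cls x"
    have xn: "x < n" "x \<notin> C" using that(2) unfolding Out_def V_def by auto
    have "c \<in> cls x" using eq aC that(1) by auto
    hence "(x,c) \<in> S\<^sup>*" using cls_eq[OF xn(1)] by auto
    hence "(c,x) \<in> S\<^sup>*" by (rule symr)
    thus False using xn inC that(1) by auto
  qed
  have Cnot: "C \<noteq> cls x" if "x \<in> Out" for x
  proof
    assume eq: "C = cls x"
    have "cls a \<noteq> cls x" using notout[of a x] that by auto
    have xn: "x < n" "x \<notin> C" using that unfolding Out_def V_def by auto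
    have "a \<in> cls x" using eq aC C_def by auto
    hence "(x,a) \<in> S\<^sup>*" using cls_eq[OF xn(1)] by auto
    hence "(a,x) \<in> S\<^sup>*" by (rule symr)
    thus False using xn inC by auto
  qed
  have Q: "V // R = insert (cls a) (insert (cls b) (cls ` Out))"
  proof -
    have "V // R = cls ` V" unfolding quotient_image cls_def ..
    also have "\<dots> = insert (cls a) (insert (cls b) (cls ` Out))"
    proof (intro equalityI subsetI)
      fix X assume "X \<in> cls ` V"
      then obtain x where x: "x \<in> V" "X = cls x" by auto
      hence xn: "x < n" unfolding V_def by auto
      show "X \<in> insert (cls a) (insert (cls b) (cls ` Out))"
      proof (cases "x \<in> C")
        case True
        hence "(a,x) \<in> S\<^sup>* \<or> (b,x) \<in> S\<^sup>*" using inC[OF xn] by auto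
        thus ?thesis using f1[OF xn a] f1[OF xn b] x by auto
      next
        case False thus ?thesis using x unfolding Out_def by auto
      qed
    next
      fix X assume "X \<in> insert (cls a) (insert (cls b) (cls ` Out))"
      thus "X \<in> cls ` V" using a b unfolding Out_def V_def by auto
    qed
    finally show ?thesis .
  qed
  have Q': "V // R' = insert C (cls ` Out)"
  proof -
    have "V // R' = cls' ` V" unfolding quotient_image cls'_def ..
    also have "\<dots> = insert C (cls ` Out)"
    proof (intro equalityI subsetI)
      fix X assume "X \<in> cls' ` V"
      then obtain x where x: "x \<in> V" "X = cls' x" by auto
      hence xn: "x < n" unfolding V_def by auto
      show "X \<in> insert C (cls ` Out)"
      proof (cases "x \<in> C")
        case True thus ?thesis using f2[OF xn] x by auto
      next
        case False thus ?thesis using x f3[OF xn] unfolding Out_def by auto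
      qed
    next
      fix X assume X: "X \<in> insert C (cls ` Out)"
      show "X \<in> cls' ` V"
      proof (cases "X = C")
        case True
        have "a \<in> C" using aC C_def by auto
        thus ?thesis using True f2[OF a] a unfolding V_def by (auto intro!: image_eqI[of _ _ a])
      next
        case False
        then obtain x where x: "x \<in> Out" "X = cls x" using X by auto
        hence "x < n" "x \<notin> C" unfolding Out_def V_def by auto
        thus ?thesis using f3 x unfolding V_def by (auto intro!: image_eqI[of _ _ x])
      qed
    qed
    finally show ?thesis .
  qed
  have fin: "finite (cls ` Out)" unfolding Out_def V_def by auto
  have n1: "cls a \<notin> cls ` Out" "cls b \<notin> cls ` Out" "C \<notin> cls ` Out"
    using notout Cnot by blast+
  have ab: "cls a \<noteq> cls b" using aC bna by auto
  show ?thesis unfolding R_def[symmetric] R'_def[symmetric] V_def[symmetric] Q Q'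
    using fin n1 ab by simp
qed

lemma adj_snoc: "adj (xs @ [(a,b)]) = adj xs \<union> {(a,b),(b,a)}"
  unfolding adj_def by auto

lemma sym_adj: "sym (adj xs)" unfolding adj_def sym_def by auto

lemma comp_count:
  assumes sg: "simple_graph n es" and sf: "spanning_forest_prefix n es k" and j: "j \<le> k"
  shows "card ({0..<n} // conn_rel n (take j es)) + j = n"
  using j
proof (induction j)
  case 0
  have "conn_rel n (take 0 es) = {(u,v). u < n \<and> v < n \<and> u = v}"
    unfolding conn_rel_def adj_def by auto
  hence "{0..<n} // conn_rel n (take 0 es) = (\<lambda>x. {x}) ` {0..<n}"
    unfolding quotient_image by (auto intro!: image_cong)
  moreover have "card ((\<lambda>x. {x}) ` {0..<n}) = n" by (subst card_image, auto)
  ultimately show ?case by simp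
next
  case (Suc j)
  have kl: "k \<le> length es" using sf unfolding spanning_forest_prefix_def by auto
  have jl: "j < length es" using Suc kl by auto
  define a where "a = fst (es ! j)"
  define b where "b = snd (es ! j)"
  have ej: "es ! j = (a,b)" unfolding a_def b_def by simp
  have a: "a < n" and b: "b < n" using simple_graphD[OF sg nth_mem[OF jl]] unfolding a_def b_def by auto
  have nab: "(a,b) \<notin> (adj (take j es))\<^sup>*" using forest_edge_new[OF sg sf, of j] Suc unfolding a_def b_def by auto
  have tk: "take (Suc j) es = take j es @ [(a,b)]" using jl ej by (simp add: take_Suc_conv_app_nth)
  have "card ({0..<n} // conn_rel n (take (Suc j) es)) + 1 = card ({0..<n} // conn_rel n (take j es))"
    unfolding conn_rel_def tk adj_snoc by (rule merge_card[OF sym_adj a b nab])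
  thus ?case using Suc by simp
qed

definition inc :: "(nat \<times> nat) list \<Rightarrow> nat \<Rightarrow> nat \<Rightarrow> real" where
  "inc es v l = (if fst (es ! l) = v then 1 else if snd (es ! l) = v then -1 else 0)"

lemma inc_alt: assumes "simple_graph n es" "l < length es"
  shows "inc es v l = (if v = fst (es ! l) then 1 else 0) - (if v = snd (es ! l) then 1 else 0)"
  using simple_graphD(3)[OF assms(1) nth_mem[OF assms(2)]] unfolding inc_def by auto

lemma kernel_forest:
  assumes sg: "simple_graph n es" and sf: "spanning_forest_prefix n es k" and j: "j \<le> k"
  and y: "\<forall>v<n. (\<Sum>l<j. inc es v l * y l) = 0"
  shows "\<forall>l<j. y l = 0"
  using j y
proof (induction j)
  case 0 thus ?case by auto
next
  case (Suc j)
  have kl: "k \<le> length es" using sf unfolding spanning_forest_prefix_def by auto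
  have jl: "j < length es" using Suc kl by auto
  define a where "a = fst (es ! j)"
  define b where "b = snd (es ! j)"
  define S where "S = adj (take j es)"
  have a: "a < n" and b: "b < n" using simple_graphD[OF sg nth_mem[OF jl]] unfolding a_def b_def by auto
  have nab: "(a,b) \<notin> S\<^sup>*" using forest_edge_new[OF sg sf, of j] Suc unfolding a_def b_def S_def by auto
  define K where "K = {v. v < n \<and> (a,v) \<in> S\<^sup>*}"
  have fK: "finite K" unfolding K_def by auto
  have colsum: "(\<Sum>v\<in>K. inc es v l) = (if fst (es ! l) \<in> K then 1 else 0) - (if snd (es ! l) \<in> K then 1 else 0)"
    if l: "l < length es" for l
    unfolding inc_alt[OF sg l] sum_subtractf using fK by (simp add: sum.delta')
  have c1: "(\<Sum>v\<in>K. inc es v l) = 0" if l: "l < j" for l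
  proof -
    have ll: "l < length es" using l jl by auto
    have "take j es ! l \<in> set (take j es)" using l jl by (intro nth_mem) simp
    hence mem: "(fst (es ! l), snd (es ! l)) \<in> set (take j es)" using l by simp
    hence e1: "(fst (es ! l), snd (es ! l)) \<in> S" "(snd (es ! l), fst (es ! l)) \<in> S" unfolding S_def adj_def by auto
    have nn: "fst (es ! l) < n" "snd (es ! l) < n" using simple_graphD[OF sg nth_mem[OF ll]] by auto
    have "fst (es ! l) \<in> K \<longleftrightarrow> snd (es ! l) \<in> K" unfolding K_def
      using nn rtrancl_into_rtrancl[of a "fst (es ! l)" S "snd (es ! l)"]
        rtrancl_into_rtrancl[of a "snd (es ! l)" S "fst (es ! l)"] e1 by auto
    thus ?thesis unfolding colsum[OF ll] by auto
  qed
  have c2: "(\<Sum>v\<in>K. inc es v j) = 1"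
  proof -
    have "a \<in> K" "b \<notin> K" unfolding K_def using a nab by auto
    thus ?thesis unfolding colsum[OF jl] a_def b_def by auto
  qed
  have "0 = (\<Sum>v\<in>K. \<Sum>l<Suc j. inc es v l * y l)" using Suc.prems(2) unfolding K_def by auto
  also have "\<dots> = (\<Sum>l<Suc j. y l * (\<Sum>v\<in>K. inc es v l))"
    by (subst sum.swap, simp add: sum_distrib_left mult.commute)
  also have "\<dots> = y j" using c1 c2 by simp
  finally have yj: "y j = 0" by simp
  have "\<forall>v<n. (\<Sum>l<j. inc es v l * y l) = 0" using Suc.prems(2) yj by auto
  hence "\<forall>l<j. y l = 0" using Suc by auto
  thus ?case using yj less_Suc_eq by auto
qed

lemma cut_edge_comb:
  assumes sg: "simple_graph n es" and sf: "spanning_forest_prefix n es k"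
  and uv: "(u,v) \<in> (adj (take k es))\<^sup>*"
  shows "\<exists>y. \<forall>x. (\<Sum>l<k. inc es x l * y l) = (if x = u then 1 else 0) - (if x = v then 1 else 0)"
  using uv
proof (induction rule: rtrancl_induct)
  case base thus ?case by (intro exI[of _ "\<lambda>_. 0"], auto)
next
  case (step p q)
  obtain y where y: "\<forall>x. (\<Sum>l<k. inc es x l * y l) = (if x = u then 1 else 0) - (if x = p then 1 else 0)"
    using step by auto
  have kl: "k \<le> length es" using sf unfolding spanning_forest_prefix_def by auto
  from step(2) obtain l0 where l0: "l0 < k" "es ! l0 = (p,q) \<or> es ! l0 = (q,p)"
    unfolding adj_def using kl by (auto simp: in_set_conv_nth)
  have l0l: "l0 < length es" using l0 kl by auto
  define \<sigma> where "\<sigma> = (if es ! l0 = (p,q) then 1 else (-1::real))"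
  define y' where "y' l = y l + (if l = l0 then \<sigma> else 0)" for l
  have pq: "p \<noteq> q" using simple_graphD(3)[OF sg nth_mem[OF l0l]] l0 by auto
  show ?case
  proof (intro exI[of _ y'] allI)
    fix x
    have "(\<Sum>l<k. inc es x l * y' l) = (\<Sum>l<k. inc es x l * y l) + \<sigma> * inc es x l0"
      unfolding y'_def using l0 by (simp add: algebra_simps sum.distrib if_distrib[of "\<lambda>z. _ * z"] cong: if_cong)
    also have "\<sigma> * inc es x l0 = (if x = p then 1 else 0) - (if x = q then 1 else 0)"
    proof (cases "es ! l0 = (p,q)")
      case True thus ?thesis by (simp add: inc_alt[OF sg l0l] \<sigma>_def)
    next
      case False
      hence "es ! l0 = (q,p)" using l0(2) by auto
      thus ?thesis using False by (simp add: inc_alt[OF sg l0l] \<sigma>_def)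
    qed
    also have "(\<Sum>l<k. inc es x l * y l) + ((if x = p then 1 else 0) - (if x = q then 1 else 0))
       = (if x = u then 1 else 0) - (if x = q then 1 else 0)"
      using y by simp
    finally show "(\<Sum>l<k. inc es x l * y' l) = (if x = u then 1 else 0) - (if x = q then 1 else 0)" .
  qed
qed

lemma incidence_carrier: "incidence n es \<in> carrier_mat n (length es)"
  unfolding incidence_def by auto

lemma incidence_entry: "v < n \<Longrightarrow> l < length es \<Longrightarrow> incidence n es $$ (v,l) = inc es v l"
  unfolding incidence_def inc_def by auto

lemma weight_mat_sym: "transpose_mat (weight_mat w) = weight_mat w"
  unfolding weight_mat_def by (intro eq_matI, auto)

theorem corollary2:
  fixes n k c n_pos n_neg n_zero :: nat and es :: "(nat \<times> nat) list" and w :: "real list"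
  assumes "simple_graph n es"
    and "length w = length es" and "\<forall>x \<in> set w. x \<noteq> 0"
    and "c = num_components n es"
    and "num_pos_eigs (laplacian n es w) = n_pos"
    and "num_neg_eigs (laplacian n es w) = n_neg"
    and "num_zero_eigs (laplacian n es w) = n_zero"
    and "spanning_forest_prefix n es k"
  shows "num_pos_eigs (R_mat n es k * weight_mat w * transpose_mat (R_mat n es k)) = n_pos
       \<and> num_neg_eigs (R_mat n es k * weight_mat w * transpose_mat (R_mat n es k)) = n_neg
       \<and> num_zero_eigs (R_mat n es k * weight_mat w * transpose_mat (R_mat n es k)) = n_zero - c"
proof -
  note sg = assms(1) and sf = assms(8)
  define m where "m = length es"
  have km: "k \<le> m" using sf unfolding spanning_forest_prefix_def m_def by auto
  define EF where "EF = incidence n (take k es)"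
  define EC where "EC = incidence n (drop k es)"
  define E where "E = incidence n es"
  define W where "W = weight_mat w"
  have EF: "EF \<in> carrier_mat n k" unfolding EF_def using incidence_carrier[of n "take k es"] km m_def by auto
  have EC: "EC \<in> carrier_mat n (m - k)" unfolding EC_def using incidence_carrier[of n "drop k es"] m_def by auto
  have E: "E \<in> carrier_mat n m" unfolding E_def m_def by (rule incidence_carrier)
  have W: "W \<in> carrier_mat m m" unfolding W_def using assms(2) m_def weight_mat_carrier[of w] by simp
  have EFe: "EF $$ (v,l) = inc es v l" if "v < n" "l < k" for v l
    unfolding EF_def using incidence_entry[of v n l "take k es"] that km m_def by (auto simp: inc_def)
  have ECe: "EC $$ (v,l) = inc es v (k + l)" if "v < n" "l < m - k" for v l
    unfolding EC_def using incidence_entry[of v n l "drop k es"] that km m_def by (auto simp: inc_def)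
  have Ee: "E $$ (v,l) = inc es v l" if "v < n" "l < m" for v l
    unfolding E_def using incidence_entry[of v n l es] that m_def by auto
  define Le where "Le = transpose_mat EF * EF"
  have Le: "Le \<in> carrier_mat k k" unfolding Le_def using EF by auto
  have "det Le \<noteq> 0"
  proof
    assume "det Le = 0"
    then obtain v where v: "v \<in> carrier_vec k" "v \<noteq> 0\<^sub>v k" "Le *\<^sub>v v = 0\<^sub>v k"
      using det_0_iff_vec_prod_zero[OF Le] by auto
    have Lee: "Le $$ (i,j) = (\<Sum>r<n. EF $$ (r,i) * 1 * EF $$ (r,j))" if "i < k" "j < k" for i j
      unfolding Le_def using orth_entry[OF EF that] by simp
    have "0 = (\<Sum>i<k. \<Sum>j<k. v $ i * Le $$ (i,j) * v $ j)"
    proof -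
      have "(\<Sum>j<k. Le $$ (i,j) * v $ j) = 0" if "i < k" for i
        using mult_vec_entry[OF Le v(1) that] v(3) that by auto
      hence "(\<Sum>j<k. v $ i * Le $$ (i,j) * v $ j) = 0" if "i < k" for i
        using that by (simp add: mult.assoc sum_distrib_left[symmetric])
      thus ?thesis by simp
    qed
    also have "\<dots> = (\<Sum>r<n. 1 * (\<Sum>i<k. EF $$ (r,i) * v $ i)^2)"
      using qf_expand[where B="\<lambda>i r. EF $$ (r,i)" and e="\<lambda>_. 1" and y="\<lambda>i. v $ i" and n=k and m=n]
      by (simp add: Lee)
    finally have "(\<Sum>r<n. (\<Sum>i<k. EF $$ (r,i) * v $ i)^2) = 0" by simp
    hence "\<forall>r<n. (\<Sum>i<k. EF $$ (r,i) * v $ i)^2 = 0"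
      by (subst (asm) sum_nonneg_eq_0_iff, auto)
    hence "\<forall>r<n. (\<Sum>l<k. inc es r l * v $ l) = 0" by (auto simp: EFe)
    from kernel_forest[OF sg sf order_refl this] have "\<forall>l<k. v $ l = 0" .
    hence "v = 0\<^sub>v k" using v(1) by (intro eq_vecI, auto)
    thus False using v(2) by auto
  qed
  hence U: "Le \<in> Units (ring_mat TYPE(real) k ())" by (rule det_non_zero_imp_unit[OF Le])
  have "mat_inverse Le \<noteq> None"
  proof
    assume "mat_inverse Le = None"
    from mat_inverse(1)[OF Le this, of "()"] U show False by simp
  qed
  then obtain G where inv: "mat_inverse Le = Some G" by (cases "mat_inverse Le") auto
  from mat_inverse(2)[OF Le inv] have G: "G \<in> carrier_mat k k" and GLe: "G * Le = 1\<^sub>m k" by auto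
  have Ycol: "\<exists>y. \<forall>x. (\<Sum>l<k. inc es x l * y l) = inc es x (k + j)" if j: "j < m - k" for j
  proof -
    have kj: "k + j < length es" using j m_def by auto
    define u where "u = fst (es ! (k + j))"
    define v where "v = snd (es ! (k + j))"
    have uv: "u < n" "v < n" using simple_graphD[OF sg nth_mem[OF kj]] unfolding u_def v_def by auto
    have "(u,v) \<in> adj es" unfolding adj_def u_def v_def using nth_mem[OF kj] by auto
    hence "(u,v) \<in> conn_rel n es" unfolding conn_rel_def using uv by auto
    hence "(u,v) \<in> conn_rel n (take k es)" using sf unfolding spanning_forest_prefix_def by auto
    hence "(u,v) \<in> (adj (take k es))\<^sup>*" unfolding conn_rel_def by auto
    from cut_edge_comb[OF sg sf this] obtain y where
      y: "\<forall>x. (\<Sum>l<k. inc es x l * y l) = (if x = u then 1 else 0) - (if x = v then 1 else 0)" by auto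
    show ?thesis
    proof (intro exI[of _ y] allI)
      fix x show "(\<Sum>l<k. inc es x l * y l) = inc es x (k + j)"
        using y[rule_format, of x] unfolding inc_alt[OF sg kj] u_def v_def by simp
    qed
  qed
  define ys where "ys j = (SOME y. \<forall>x. (\<Sum>l<k. inc es x l * y l) = inc es x (k + j))" for j
  have ys: "(\<Sum>l<k. inc es x l * ys j l) = inc es x (k + j)" if "j < m - k" for j x
    using someI_ex[OF Ycol[OF that]] unfolding ys_def by auto
  define Y where "Y = mat k (m - k) (\<lambda>(l,j). ys j l)"
  have Y: "Y \<in> carrier_mat k (m - k)" unfolding Y_def by auto
  have EFY: "EF * Y = EC"
  proof (intro eq_matI)
    fix v j assume "v < dim_row EC" "j < dim_col EC"
    hence vj: "v < n" "j < m - k" using EC by auto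
    show "(EF * Y) $$ (v,j) = EC $$ (v,j)"
      using mult_entry[OF EF Y vj] ys[OF vj(2), of v] ECe[OF vj] vj
      by (simp add: EFe Y_def)
  qed (insert EF Y EC, auto)
  define X where "X = G * transpose_mat EF * EC"
  have X: "X \<in> carrier_mat k (m - k)" unfolding X_def using G EF EC by auto
  have EFX: "EF * X = EC"
  proof -
    have "EF * X = EF * ((G * (transpose_mat EF * EF)) * Y)" unfolding X_def EFY[symmetric]
      using G EF Y by (simp add: assoc_mult_mat[of _ k k _ n _ k] assoc_mult_mat[of _ k n _ k _ "m - k"]
        assoc_mult_mat[of _ k k _ k _ "m - k"] assoc_mult_mat[of G k k "transpose_mat EF" n _ "m - k"])
    also have "\<dots> = EF * Y" using GLe Y unfolding Le_def by simp
    finally show ?thesis using EFY by simp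
  qed
  define R where "R = R_mat n es k"
  have Rdef: "R = mat k m (\<lambda>(i, j). if j < k then (if i = j then 1 else 0) else X $$ (i, j - k))"
  proof -
    have inv': "the (mat_inverse (transpose_mat EF * EF)) = G" using inv unfolding Le_def by simp
    show ?thesis unfolding R_def R_mat_def Let_def EF_def[symmetric] EC_def[symmetric] m_def[symmetric] inv' X_def ..
  qed
  have R: "R \<in> carrier_mat k m" unfolding Rdef by auto
  have EFR: "EF * R = E"
  proof (intro eq_matI)
    fix v j assume "v < dim_row E" "j < dim_col E"
    hence vj: "v < n" "j < m" using E by auto
    show "(EF * R) $$ (v,j) = E $$ (v,j)"
    proof (cases "j < k")
      case True
      have "(EF * R) $$ (v,j) = (\<Sum>l<k. EF $$ (v,l) * (if l = j then 1 else 0))"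
        using mult_entry[OF EF R vj] True vj by (auto simp: Rdef intro!: sum.cong)
      also have "\<dots> = EF $$ (v,j)" using True by (simp add: if_distrib[of "\<lambda>x. _ * x"] sum.delta' cong: if_cong)
      finally show ?thesis using EFe[OF vj(1) True] Ee[OF vj] by simp
    next
      case False
      hence jk: "j - k < m - k" using vj by auto
      have "(EF * R) $$ (v,j) = (\<Sum>l<k. EF $$ (v,l) * X $$ (l, j - k))"
        using mult_entry[OF EF R vj] False vj by (auto simp: Rdef intro!: sum.cong)
      also have "\<dots> = (EF * X) $$ (v, j - k)" using mult_entry[OF EF X vj(1) jk] by simp
      also have "\<dots> = EC $$ (v, j - k)" unfolding EFX ..
      finally show ?thesis using ECe[OF vj(1) jk] Ee[OF vj] False by simp
    qed
  qed (insert EF R E, auto)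
  define M where "M = R * W * transpose_mat R"
  have M: "M \<in> carrier_mat k k" unfolding M_def using R W by auto
  have RW: "R * W \<in> carrier_mat k m" using R W by auto
  have symM: "transpose_mat M = M" unfolding M_def
    using transpose_mult[OF RW, of "transpose_mat R" k] transpose_mult[OF R W] R W weight_mat_sym[of w]
    by (simp add: W_def assoc_mult_mat[of R k m _ m "transpose_mat R" k])
  have LM: "laplacian n es w = EF * M * transpose_mat EF"
  proof -
    have "laplacian n es w = (EF * R) * W * transpose_mat (EF * R)"
      unfolding laplacian_def EFR E_def W_def ..
    also have "transpose_mat (EF * R) = transpose_mat R * transpose_mat EF" by (rule transpose_mult[OF EF R])
    also have "(EF * R) * W * (transpose_mat R * transpose_mat EF) = EF * M * transpose_mat EF"
      unfolding M_def using EF R W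
      by (simp add: assoc_mult_mat[of _ n k _ m _ m] assoc_mult_mat[of _ k m _ m _ k] assoc_mult_mat[of _ n k _ k _ n]
        assoc_mult_mat[of _ k m _ m _ n] assoc_mult_mat[of _ m m _ k _ n] assoc_mult_mat[of _ n m _ m _ k]
        assoc_mult_mat[of _ n m _ k _ n] assoc_mult_mat[of _ k m _ k _ n]
        assoc_mult_mat[of EF n k "R * W" m "transpose_mat R * transpose_mat EF" n]
        assoc_mult_mat[of R k m W m "transpose_mat R * transpose_mat EF" n])
    finally show ?thesis .
  qed
  have GP: "G * (transpose_mat EF * EF) = 1\<^sub>m k" using GLe unfolding Le_def .
  note it = inertia_transfer[OF EF M symM G GP, folded LM]
  have cc: "c + k = n" using comp_count[OF sg sf order_refl] sf assms(4)
    unfolding spanning_forest_prefix_def num_components_def by auto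
  have MR: "R_mat n es k * weight_mat w * transpose_mat (R_mat n es k) = M" unfolding M_def R_def W_def ..
  show ?thesis unfolding MR using it assms(5-7) cc by auto
qed

end
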